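(* Let $q$ be a prime power and let $n, t, m$ be positive integers with $t \geq m$. Choose a sequence $S=(g_1,\dots,g_t)$ of $t$ vectors of $\mathbb{F}_q^n$ uniformly at random (each $g_i$ independently and uniformly in $\mathbb{F}_q^n$). Then $$\mathbb{P}[e_m(S)=0]\leq \left(\frac{m}{q}\right)^{n}.$$
   Context: $\mathbb{F}_q^n$ is viewed as a commutative ring with coordinatewise addition and multiplication. For elements $g_1,\dots,g_t$ of a commutative ring, $e_m(g_1,\dots,g_t)=\sum_{1\leq i_1<\cdots<i_m\leq t}\prod_{j=1}^m g_{i_j}$ is the $m$-th elementary symmetric polynomial evaluated at them. *)

theory Defs
  imports "HOL-Analysis.Analysis"
begin

definition esym :: "nat \<Rightarrow> nat \<Rightarrow> (nat \<Rightarrow> 'b::comm_ring_1) \<Rightarrow> 'b" where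
  "esym m t g = (\<Sum>I \<in> {I. I \<subseteq> {0..<t} \<and> card I = m}. \<Prod>i\<in>I. g i)"

end

theory Submission
  imports Defs
begin

lemma esym_cong:
  assumes "\<And>i. i < t \<Longrightarrow> g i = h i"
  shows "esym m t g = esym m t h"
  unfolding esym_def
  by (rule sum.cong[OF refl], rule prod.cong[OF refl]) (use assms in auto)

lemma esym_0: "esym 0 t g = 1"
proof -
  have "{I. I \<subseteq> {0..<t} \<and> card I = 0} = {{}}"
    using finite_subset by fastforce
  thus ?thesis unfolding esym_def by simp
qed

lemma esym_Suc: "esym (Suc m) (Suc t) g = g t * esym m t g + esym (Suc m) t g"
proof -
  let ?A = "{I. I \<subseteq> {0..<t} \<and> card I = Suc m}"
  let ?B = "{I. I \<subseteq> {0..<t} \<and> card I = m}"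
  have fA: "finite ?A" and fB: "finite ?B" by auto
  have eq: "{I. I \<subseteq> {0..<Suc t} \<and> card I = Suc m} = ?A \<union> insert t ` ?B"
  proof (rule set_eqI, rule iffI)
    fix I assume I: "I \<in> {I. I \<subseteq> {0..<Suc t} \<and> card I = Suc m}"
    show "I \<in> ?A \<union> insert t ` ?B"
    proof (cases "t \<in> I")
      case True
      have fI: "finite I" using I finite_subset by blast
      have "I = insert t (I - {t})" using True by blast
      moreover have "I - {t} \<in> ?B" using I True fI by auto
      ultimately show ?thesis by blast
    next
      case False
      then have "I \<subseteq> {0..<t}" using I by (auto simp: less_Suc_eq)
      thus ?thesis using I by auto
    qed
  next
    fix I assume "I \<in> ?A \<union> insert t ` ?B"
    then show "I \<in> {I. I \<subseteq> {0..<Suc t} \<and> card I = Suc m}"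
    proof
      assume "I \<in> ?A" thus ?thesis by auto
    next
      assume "I \<in> insert t ` ?B"
      then obtain J where J: "J \<in> ?B" "I = insert t J" by blast
      have "finite J" "t \<notin> J" using J finite_subset by auto
      thus ?thesis using J by auto
    qed
  qed
  have disj: "?A \<inter> insert t ` ?B = {}" by auto
  have inj: "inj_on (insert t) ?B"
    by (rule inj_onI) (metis atLeastLessThan_iff insert_ident less_irrefl mem_Collect_eq subsetD)
  have "esym (Suc m) (Suc t) g = (\<Sum>I\<in>?A. prod g I) + (\<Sum>I\<in>insert t ` ?B. prod g I)"
    unfolding esym_def eq by (rule sum.union_disjoint) (use fA fB disj in auto)
  also have "(\<Sum>I\<in>insert t ` ?B. prod g I) = (\<Sum>J\<in>?B. prod g (insert t J))"
    by (rule sum.reindex[OF inj, unfolded comp_def])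
  also have "\<dots> = (\<Sum>J\<in>?B. g t * prod g J)"
  proof (rule sum.cong[OF refl])
    fix J assume J: "J \<in> ?B"
    have "finite J" "t \<notin> J" using J finite_subset by auto
    thus "prod g (insert t J) = g t * prod g J" by simp
  qed
  also have "\<dots> = g t * esym m t g" unfolding esym_def by (simp add: sum_distrib_left)
  finally show ?thesis unfolding esym_def by simp
qed

lemma card_lin_le:
  fixes c d :: "'a::{finite,field}"
  assumes "c \<noteq> 0"
  shows "card {a. a * c + d = 0} \<le> 1"
proof -
  have "{a. a * c + d = 0} \<subseteq> {- d / c}" using assms by (auto simp: field_simps eq_neg_iff_add_eq_0)
  hence "card {a. a * c + d = 0} \<le> card {- d / c}" by (rule card_mono[rotated]) simp
  thus ?thesis by simp
qed

lemma count_scalar: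
  "m \<le> t \<Longrightarrow> card {g \<in> PiE {0..<t} (\<lambda>_. UNIV :: 'a::{finite,field} set). esym m t g = 0}
      * CARD('a) \<le> m * CARD('a) ^ t"
proof (induction t arbitrary: m)
  case 0
  then show ?case by (simp add: esym_0)
next
  case (Suc t)
  show ?case
  proof (cases m)
    case 0
    then show ?thesis by (simp add: esym_0)
  next
    case (Suc m')
    with Suc.prems have mt: "m' \<le> t" by simp
    let ?q = "CARD('a)"
    let ?P = "PiE {0..<t} (\<lambda>_. UNIV :: 'a set)"
    let ?Z = "{g \<in> PiE {0..<Suc t} (\<lambda>_. UNIV :: 'a set). esym (Suc m') (Suc t) g = 0}"
    let ?Z' = "{f \<in> ?P. esym m' t f = 0}"
    let ?S = "Sigma ?P (\<lambda>f. {a. a * esym m' t f + esym (Suc m') t f = 0})"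
    let ?h = "\<lambda>(f, a). f(t := a)"
    have upd: "esym (Suc m') (Suc t) (f(t := a)) = a * esym m' t f + esym (Suc m') t f" for f a
    proof -
      have "esym m' t (f(t := a)) = esym m' t f" "esym (Suc m') t (f(t := a)) = esym (Suc m') t f"
        by (rule esym_cong; simp)+
      thus ?thesis by (simp add: esym_Suc)
    qed
    have injh: "inj_on ?h ?S"
    proof (rule inj_onI, clarify)
      fix f a f' a'
      assume f: "f \<in> ?P" and f': "f' \<in> ?P" and e: "f(t := a) = f'(t := a')"
      have "a = a'" using fun_cong[OF e, of t] by simp
      moreover have "f = f'"
      proof
        fix i show "f i = f' i"
        proof (cases "i = t")
          case True thus ?thesis using f f' by (auto simp: PiE_def extensional_def)
        next
          case False thus ?thesis using fun_cong[OF e, of i] by simp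
        qed
      qed
      ultimately show "f = f' \<and> a = a'" by simp
    qed
    have imgh: "?h ` ?S = ?Z"
    proof (rule set_eqI, rule iffI)
      fix g assume "g \<in> ?h ` ?S"
      then obtain f a where fa: "f \<in> ?P" "a * esym m' t f + esym (Suc m') t f = 0" "g = f(t := a)"
        by auto
      have "g \<in> PiE {0..<Suc t} (\<lambda>_. UNIV)"
        using fa by (auto simp: PiE_def extensional_def)
      thus "g \<in> ?Z" using fa upd[of f a] by simp
    next
      fix g assume g: "g \<in> ?Z"
      let ?f = "restrict g {0..<t}"
      have gf: "g = ?f(t := g t)"
      proof
        fix i show "g i = (?f(t := g t)) i"
          using g by (cases "i < t") (auto simp: PiE_def extensional_def)
      qed
      have "esym (Suc m') (Suc t) g = g t * esym m' t ?f + esym (Suc m') t ?f"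
        using upd[of ?f "g t"] gf[symmetric] by simp
      hence "(?f, g t) \<in> ?S" using g by auto
      moreover have "g = ?h (?f, g t)" by (simp only: prod.case) (rule gf)
      ultimately show "g \<in> ?h ` ?S" by (rule rev_image_eqI)
    qed
    have cardP: "card ?P = ?q ^ t" by (simp add: card_PiE)
    have "card ?Z = card ?S" using card_image[OF injh] imgh by simp
    also have "\<dots> = (\<Sum>f\<in>?P. card {a. a * esym m' t f + esym (Suc m') t f = 0})"
      by (rule card_SigmaI) (auto intro: finite_PiE)
    also have "\<dots> \<le> (\<Sum>f\<in>?P. 1 + (if esym m' t f = 0 then ?q else 0))"
    proof (rule sum_mono)
      fix f assume "f \<in> ?P"
      show "card {a. a * esym m' t f + esym (Suc m') t f = 0} \<le> 1 + (if esym m' t f = 0 then ?q else 0)"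
      proof (cases "esym m' t f = 0")
        case True
        have "card {a. a * esym m' t f + esym (Suc m') t f = 0} \<le> ?q"
          by (rule card_mono) auto
        thus ?thesis using True by simp
      next
        case False thus ?thesis using card_lin_le[OF False] by simp
      qed
    qed
    also have "\<dots> = (\<Sum>f\<in>?P. 1) + (\<Sum>f\<in>?P. if esym m' t f = 0 then ?q else 0)"
      by (rule sum.distrib)
    also have "\<dots> = card ?P + (\<Sum>f\<in>?Z'. ?q)"
      using sum.inter_filter[of ?P "\<lambda>_. ?q" "\<lambda>f. esym m' t f = 0"] by (simp add: finite_PiE)
    also have "\<dots> = card ?P + ?q * card ?Z'" by simp
    finally have c1: "card ?Z \<le> ?q ^ t + ?q * card ?Z'" using cardP by simp
    have ih: "card ?Z' * ?q \<le> m' * ?q ^ t" using Suc.IH[OF mt] .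
    have "card ?Z * ?q \<le> (?q ^ t + ?q * card ?Z') * ?q" using c1 by simp
    also have "\<dots> = ?q ^ Suc t + ?q * (card ?Z' * ?q)" by (simp add: algebra_simps)
    also have "\<dots> \<le> ?q ^ Suc t + ?q * (m' * ?q ^ t)" using ih by simp
    also have "\<dots> = Suc m' * ?q ^ Suc t" by (simp add: algebra_simps)
    finally show ?thesis using Suc by simp
  qed
qed

lemma prod_component: "(prod f A) $ k = prod (\<lambda>x. f x $ k) A"
  by (induction A rule: infinite_finite_induct) auto

lemma esym_component: "(esym m t S) $ k = esym m t (\<lambda>i. S i $ k)"
  unfolding esym_def by (simp add: prod_component)

theorem proposition2p2:
  fixes m t :: nat
  assumes "1 \<le> m" and "m \<le> t"
  shows "real (card {S \<in> PiE {0..<t} (\<lambda>_. (UNIV :: ('a::{finite,field} ^ 'n) set)).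
                       esym m t S = 0})
         / real (card (PiE {0..<t} (\<lambda>_. (UNIV :: ('a ^ 'n) set))))
       \<le> (real m / real CARD('a)) ^ CARD('n)"
proof -
  let ?q = "CARD('a)"
  let ?N = "CARD('n)"
  let ?Z = "{g \<in> PiE {0..<t} (\<lambda>_. UNIV :: 'a set). esym m t g = 0}"
  let ?ZS = "{S \<in> PiE {0..<t} (\<lambda>_. (UNIV :: ('a ^ 'n) set)). esym m t S = 0}"
  let ?phi = "\<lambda>S. (\<lambda>k::'n. restrict (\<lambda>i. S i $ k) {0..<t})"
  have bij: "bij_betw ?phi ?ZS (PiE (UNIV :: 'n set) (\<lambda>_. ?Z))"
  proof (rule bij_betw_imageI)
    show "inj_on ?phi ?ZS"
    proof (rule inj_onI)
      fix S S' assume S: "S \<in> ?ZS" and S': "S' \<in> ?ZS" and e: "?phi S = ?phi S'"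
      show "S = S'"
      proof
        fix i show "S i = S' i"
        proof (cases "i < t")
          case True
          show ?thesis
          proof (rule vec_eq_iff[THEN iffD2], rule allI)
            fix k show "S i $ k = S' i $ k"
              using fun_cong[OF fun_cong[OF e, of k], of i] True by simp
          qed
        next
          case False
          have "S \<in> extensional {0..<t}" "S' \<in> extensional {0..<t}" using S S' by (simp_all add: PiE_iff)
          thus ?thesis using False by (simp add: extensional_def)
        qed
      qed
    qed
    show "?phi ` ?ZS = PiE (UNIV :: 'n set) (\<lambda>_. ?Z)"
    proof (rule set_eqI, rule iffI)
      fix F assume "F \<in> ?phi ` ?ZS"
      then obtain S where S: "S \<in> ?ZS" "F = ?phi S" by blast
      have "F k \<in> ?Z" for k
      proof -
        have "esym m t (F k) = esym m t (\<lambda>i. S i $ k)" using S(2) by (intro esym_cong) simp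
        also have "\<dots> = 0" using S(1) esym_component[of m t S k, symmetric] by simp
        finally show ?thesis using S(2) by simp
      qed
      thus "F \<in> PiE (UNIV :: 'n set) (\<lambda>_. ?Z)" by auto
    next
      fix F assume F: "F \<in> PiE (UNIV :: 'n set) (\<lambda>_. ?Z)"
      define S where "S = (\<lambda>i. if i < t then (\<chi> k::'n. F k i) else undefined)"
      have SP: "S \<in> PiE {0..<t} (\<lambda>_. (UNIV :: ('a ^ 'n) set))"
        by (auto simp: S_def PiE_def extensional_def)
      have FS: "F = ?phi S"
      proof (rule ext)+
        fix k i
        have "F k \<in> ?Z" using F by blast
        hence Fk: "F k \<in> extensional {0..<t}" by (simp add: PiE_iff)
        show "F k i = ?phi S k i"
        proof (cases "i < t")
          case True thus ?thesis by (simp add: S_def)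
        next
          case False thus ?thesis using Fk by (simp add: extensional_def)
        qed
      qed
      have "esym m t S = 0"
      proof (rule vec_eq_iff[THEN iffD2], rule allI)
        fix k
        have "esym m t S $ k = esym m t (F k)"
          unfolding esym_component FS by (intro esym_cong) simp
        also have "\<dots> = 0" using F by auto
        finally show "esym m t S $ k = 0 $ k" by simp
      qed
      thus "F \<in> ?phi ` ?ZS" using SP FS by blast
    qed
  qed
  have cZS: "card ?ZS = card ?Z ^ ?N"
    using bij_betw_same_card[OF bij] by (simp add: card_PiE)
  have cT: "card (PiE {0..<t} (\<lambda>_. (UNIV :: ('a ^ 'n) set))) = (?q ^ t) ^ ?N"
  proof -
    have "card (PiE {0..<t} (\<lambda>_. (UNIV :: ('a ^ 'n) set))) = (?q ^ ?N) ^ t"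
      by (simp add: card_PiE)
    also have "\<dots> = (?q ^ t) ^ ?N" by (metis power_mult mult.commute)
    finally show ?thesis .
  qed
  have cs: "card ?Z * ?q \<le> m * ?q ^ t" using count_scalar[OF assms(2)] .
  have qpos: "(0::real) < real ?q" by simp
  have r: "real (card ?Z) / real ?q ^ t \<le> real m / real ?q"
  proof -
    have "real (card ?Z * ?q) \<le> real (m * ?q ^ t)"
      using cs by (rule of_nat_mono)
    hence h: "real (card ?Z) * real ?q \<le> real m * real ?q ^ t" by simp
    have p1: "0 < real ?q ^ t" "0 < real ?q" using qpos by auto
    have "real (card ?Z) / real ?q ^ t = (real (card ?Z) * real ?q) / (real ?q ^ t * real ?q)"
      using p1 by simp
    also have "\<dots> \<le> (real m * real ?q ^ t) / (real ?q ^ t * real ?q)"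
      using h p1 by (intro divide_right_mono) auto
    also have "\<dots> = real m / real ?q" using p1 by simp
    finally show ?thesis .
  qed
  have "real (card ?ZS) / real (card (PiE {0..<t} (\<lambda>_. (UNIV :: ('a ^ 'n) set))))
        = (real (card ?Z) / real ?q ^ t) ^ ?N"
    unfolding cZS cT by (simp add: power_divide)
  also have "\<dots> \<le> (real m / real ?q) ^ ?N"
    by (rule power_mono[OF r]) simp
  finally show ?thesis .
qed

end
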